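(* Let $B\in\mathbb{R}^{n\times n}$ be a nonsingular $M$-matrix and $C\in\mathbb{R}^{n\times n}$ an $M$-matrix such that $B^{-1}C\ge 0$, and suppose that $B-C-I$ is a nonsingular $M$-matrix. Let $\Phi$ be the maximal nonpositive solvent of $X^2+BX+C=0$ and $\Psi$ the maximal nonpositive solvent of the dual equation $CY^2+BY+I=0$ (these exist under the stated hypotheses). Let $u\in\mathbb{R}^n$ be any positive vector such that $v:=(B-C-I)u>0$. Then: (a) $\Phi\le -B^{-1}C\le 0$, $-\Phi u\le u-B^{-1}v$, $\Psi\le -B^{-1}\le 0$, and $-\Psi u\le u-B^{-1}v$; (b) $\rho(\Phi)<1$ and $\rho(\Psi)<1$; (c) $I-\Phi\Psi$ and $I-\Psi\Phi$ are nonsingular $M$-matrices.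
   Context: $\rho(\cdot)$ denotes spectral radius. Inequalities between matrices and vectors are entrywise; a vector is positive if all entries are positive. A matrix is nonpositive if all its entries are $\le 0$. A solvent of a matrix equation is a matrix solution; the maximal nonpositive solvent is a nonpositive solvent $\Phi$ with $X\le\Phi$ entrywise for every nonpositive solvent $X$. A $Z$-matrix is a real square matrix with nonpositive off-diagonal entries; a $Z$-matrix $A=sI-N$ with $N\ge 0$ is an $M$-matrix if $s\ge\rho(N)$ and a nonsingular $M$-matrix if $s>\rho(N)$. *)

theory Defs
  imports "Jordan_Normal_Form.Spectral_Radius"
begin

definition rho :: "real mat \<Rightarrow> real" where
  "rho A = spectral_radius (map_mat complex_of_real A)"

definition mat_inv :: "real mat \<Rightarrow> real mat" where
  "mat_inv A = (THE X. X \<in> carrier_mat (dim_row A) (dim_row A) \<and>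
                      A * X = 1\<^sub>m (dim_row A) \<and> X * A = 1\<^sub>m (dim_row A))"

definition pos_vec :: "real vec \<Rightarrow> bool" where
  "pos_vec v = (\<forall>i < dim_vec v. v $ i > 0)"

definition nonpos_mat :: "real mat \<Rightarrow> bool" where
  "nonpos_mat A = (\<forall>i < dim_row A. \<forall>j < dim_col A. A $$ (i,j) \<le> 0)"

definition Z_matrix :: "nat \<Rightarrow> real mat \<Rightarrow> bool" where
  "Z_matrix n A = (A \<in> carrier_mat n n \<and> (\<forall>i<n. \<forall>j<n. i \<noteq> j \<longrightarrow> A $$ (i,j) \<le> 0))"

definition M_matrix :: "nat \<Rightarrow> real mat \<Rightarrow> bool" where
  "M_matrix n A = (Z_matrix n A \<and> (\<exists>s N. N \<in> carrier_mat n n \<and> 0\<^sub>m n n \<le> N \<and>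
       A = s \<cdot>\<^sub>m 1\<^sub>m n - N \<and> s \<ge> rho N))"

definition nonsing_M_matrix :: "nat \<Rightarrow> real mat \<Rightarrow> bool" where
  "nonsing_M_matrix n A = (Z_matrix n A \<and> (\<exists>s N. N \<in> carrier_mat n n \<and> 0\<^sub>m n n \<le> N \<and>
       A = s \<cdot>\<^sub>m 1\<^sub>m n - N \<and> s > rho N))"

definition max_nonpos_solvent :: "nat \<Rightarrow> real mat \<Rightarrow> real mat \<Rightarrow> real mat \<Rightarrow> bool" where
  "max_nonpos_solvent n B C P = (P \<in> carrier_mat n n \<and> nonpos_mat P \<and>
      P * P + B * P + C = 0\<^sub>m n n \<and>
      (\<forall>X \<in> carrier_mat n n. nonpos_mat X \<and> X * X + B * X + C = 0\<^sub>m n n \<longrightarrow> X \<le> P))"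

definition max_nonpos_solvent_dual :: "nat \<Rightarrow> real mat \<Rightarrow> real mat \<Rightarrow> real mat \<Rightarrow> bool" where
  "max_nonpos_solvent_dual n B C P = (P \<in> carrier_mat n n \<and> nonpos_mat P \<and>
      C * (P * P) + B * P + 1\<^sub>m n = 0\<^sub>m n n \<and>
      (\<forall>Y \<in> carrier_mat n n. nonpos_mat Y \<and> C * (Y * Y) + B * Y + 1\<^sub>m n = 0\<^sub>m n n \<longrightarrow> Y \<le> P))"

end

theory Submission
  imports Defs
begin

lemma me_mult:
  "A \<in> carrier_mat n n \<Longrightarrow> B \<in> carrier_mat n n \<Longrightarrow> i < n \<Longrightarrow> j < n \<Longrightarrow>
   (A * B) $$ (i,j) = (\<Sum>k<n. A $$ (i,k) * B $$ (k,j))"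
  by (simp add: scalar_prod_def atLeast0LessThan)

lemma me_mv:
  "A \<in> carrier_mat n n \<Longrightarrow> v \<in> carrier_vec n \<Longrightarrow> i < n \<Longrightarrow>
   (A *\<^sub>v v) $ i = (\<Sum>k<n. A $$ (i,k) * v $ k)"
  by (simp add: scalar_prod_def atLeast0LessThan)

lemma mat_le_iff:
  "A \<in> carrier_mat n m \<Longrightarrow> B \<in> carrier_mat n m \<Longrightarrow>
   (A \<le> B) = (\<forall>i<n. \<forall>j<m. A $$ (i,j) \<le> B $$ (i,j))"
  by (auto simp: less_eq_mat_def)

lemma vec_le_iff:
  "v \<in> carrier_vec n \<Longrightarrow> w \<in> carrier_vec n \<Longrightarrow>
   (v \<le> w) = (\<forall>i<n. v $ i \<le> w $ i)"
  by (auto simp: less_eq_vec_def)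

lemma exists_argmin:
  fixes f :: "nat \<Rightarrow> real"
  assumes "n > 0"
  shows "\<exists>i0<n. \<forall>j<n. f i0 \<le> f j"
proof -
  let ?M = "Min (f ` {..<n})"
  have "?M \<in> f ` {..<n}" using assms by (intro Min_in) auto
  then obtain i0 where "i0 < n" "f i0 = ?M" by auto
  moreover have "\<forall>j<n. ?M \<le> f j" by auto
  ultimately show ?thesis by auto
qed

lemma exists_argmax:
  fixes f :: "nat \<Rightarrow> real"
  assumes "n > 0"
  shows "\<exists>i0<n. \<forall>j<n. f j \<le> f i0"
proof -
  let ?M = "Max (f ` {..<n})"
  have "?M \<in> f ` {..<n}" using assms by (intro Max_in) auto
  then obtain i0 where "i0 < n" "f i0 = ?M" by auto
  moreover have "\<forall>j<n. f j \<le> ?M" by auto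
  ultimately show ?thesis by auto
qed

lemma Z_core:
  fixes A :: "real mat"
  assumes A: "A \<in> carrier_mat n n" and Z: "\<forall>i<n. \<forall>j<n. i \<noteq> j \<longrightarrow> A $$ (i,j) \<le> 0"
  and w: "w \<in> carrier_vec n" "\<forall>i<n. w $ i > 0"
  and x: "x \<in> carrier_vec n" and n: "n > 0"
  shows "\<exists>i0<n. \<forall>j<n. x $ i0 / w $ i0 \<le> x $ j / w $ j \<and>
          (A *\<^sub>v x) $ i0 \<le> (x $ i0 / w $ i0) * (A *\<^sub>v w) $ i0"
proof -
  obtain i0 where i0: "i0 < n" and mn: "\<forall>j<n. x $ i0 / w $ i0 \<le> x $ j / w $ j"
    using exists_argmin[OF n, of "\<lambda>j. x $ j / w $ j"] by auto
  define m where "m = x $ i0 / w $ i0"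
  have "(A *\<^sub>v x) $ i0 = (\<Sum>k<n. A $$ (i0,k) * x $ k)" using me_mv[OF A x i0] .
  also have "\<dots> \<le> (\<Sum>k<n. A $$ (i0,k) * (m * w $ k))"
  proof (rule sum_mono)
    fix k assume "k \<in> {..<n}"
    hence k: "k < n" by auto
    show "A $$ (i0,k) * x $ k \<le> A $$ (i0,k) * (m * w $ k)"
    proof (cases "k = i0")
      case True
      have "w $ i0 \<noteq> 0" using w(2) i0 by force
      then show ?thesis using True by (simp add: m_def)
    next
      case False
      have "m \<le> x $ k / w $ k" using mn k by (simp add: m_def)
      hence "m * w $ k \<le> x $ k" using w(2) k by (simp add: pos_le_divide_eq)
      moreover have "A $$ (i0,k) \<le> 0" using Z False k i0 by auto
      ultimately show ?thesis by (simp add: mult_left_mono_neg)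
    qed
  qed
  also have "\<dots> = m * (\<Sum>k<n. A $$ (i0,k) * w $ k)"
    by (simp add: sum_distrib_left algebra_simps)
  also have "\<dots> = m * (A *\<^sub>v w) $ i0" using me_mv[OF A w(1) i0] by simp
  finally show ?thesis using i0 mn unfolding m_def by auto
qed

lemma Z_mono:
  fixes A :: "real mat"
  assumes A: "A \<in> carrier_mat n n" and Z: "\<forall>i<n. \<forall>j<n. i \<noteq> j \<longrightarrow> A $$ (i,j) \<le> 0"
  and w: "w \<in> carrier_vec n" "\<forall>i<n. w $ i > 0" "\<forall>i<n. (A *\<^sub>v w) $ i > 0"
  and x: "x \<in> carrier_vec n"
  shows "(\<forall>i<n. (A *\<^sub>v x) $ i \<ge> 0) \<Longrightarrow> (\<forall>i<n. x $ i \<ge> 0)"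
    and "(\<forall>i<n. (A *\<^sub>v x) $ i > 0) \<Longrightarrow> (\<forall>i<n. x $ i > 0)"
proof -
  assume h: "\<forall>i<n. (A *\<^sub>v x) $ i \<ge> 0"
  show "\<forall>i<n. x $ i \<ge> 0"
  proof (cases "n = 0")
    case False
    then obtain i0 where i0: "i0 < n" and mn: "\<forall>j<n. x $ i0 / w $ i0 \<le> x $ j / w $ j"
      and le: "(A *\<^sub>v x) $ i0 \<le> (x $ i0 / w $ i0) * (A *\<^sub>v w) $ i0"
      using Z_core[OF A Z w(1,2) x] by auto
    have "0 \<le> (x $ i0 / w $ i0) * (A *\<^sub>v w) $ i0" using h i0 le by force
    moreover have "(A *\<^sub>v w) $ i0 > 0" using w(3) i0 by auto
    ultimately have m0: "0 \<le> x $ i0 / w $ i0" by (metis mult_neg_pos not_le)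
    show ?thesis
    proof (intro allI impI)
      fix j assume j: "j < n"
      have "0 \<le> x $ j / w $ j" using m0 mn j by force
      moreover have "w $ j > 0" using w(2) j by auto
      ultimately show "0 \<le> x $ j" by (simp add: zero_le_divide_iff)
    qed
  qed auto
next
  assume h: "\<forall>i<n. (A *\<^sub>v x) $ i > 0"
  show "\<forall>i<n. x $ i > 0"
  proof (cases "n = 0")
    case False
    then obtain i0 where i0: "i0 < n" and mn: "\<forall>j<n. x $ i0 / w $ i0 \<le> x $ j / w $ j"
      and le: "(A *\<^sub>v x) $ i0 \<le> (x $ i0 / w $ i0) * (A *\<^sub>v w) $ i0"
      using Z_core[OF A Z w(1,2) x] by auto
    have "0 < (x $ i0 / w $ i0) * (A *\<^sub>v w) $ i0" using h i0 le by force
    moreover have "(A *\<^sub>v w) $ i0 > 0" using w(3) i0 by auto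
    ultimately have m0: "0 < x $ i0 / w $ i0" by (metis mult_nonpos_nonneg not_le less_le)
    show ?thesis
    proof (intro allI impI)
      fix j assume j: "j < n"
      have "0 < x $ j / w $ j" using m0 mn j by force
      moreover have "w $ j > 0" using w(2) j by auto
      ultimately show "0 < x $ j" by (simp add: zero_less_divide_iff)
    qed
  qed auto
qed

lemma Z_inverse:
  fixes A :: "real mat"
  assumes Zm: "Z_matrix n A"
  and w: "w \<in> carrier_vec n" "\<forall>i<n. w $ i > 0" "\<forall>i<n. (A *\<^sub>v w) $ i > 0"
  shows "mat_inv A \<in> carrier_mat n n \<and> A * mat_inv A = 1\<^sub>m n \<and> mat_inv A * A = 1\<^sub>m n
     \<and> (\<forall>i<n. \<forall>j<n. mat_inv A $$ (i,j) \<ge> 0)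
     \<and> (\<forall>v \<in> carrier_vec n. (\<forall>i<n. v $ i > 0) \<longrightarrow> (\<forall>i<n. (mat_inv A *\<^sub>v v) $ i > 0))"
proof -
  from Zm have A: "A \<in> carrier_mat n n" and Z: "\<forall>i<n. \<forall>j<n. i \<noteq> j \<longrightarrow> A $$ (i,j) \<le> 0"
    unfolding Z_matrix_def by auto
  note mono = Z_mono[OF A Z w]
  have "det A \<noteq> 0"
  proof
    assume "det A = 0"
    then obtain v where v: "v \<in> carrier_vec n" "v \<noteq> 0\<^sub>v n" "A *\<^sub>v v = 0\<^sub>v n"
      using det_0_iff_vec_prod_zero[OF A] by auto
    have "\<forall>i<n. v $ i \<ge> 0" using mono(1)[OF v(1)] v(3) by simp
    moreover have "\<forall>i<n. (- v) $ i \<ge> 0"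
    proof (rule mono(1))
      show "- v \<in> carrier_vec n" using v by simp
      show "\<forall>i<n. 0 \<le> (A *\<^sub>v - v) $ i"
      proof (intro allI impI)
        fix i assume i: "i < n"
        have "(A *\<^sub>v - v) $ i = (\<Sum>k<n. A $$ (i,k) * (- v) $ k)" using me_mv[OF A _ i] v by simp
        also have "\<dots> = - (\<Sum>k<n. A $$ (i,k) * v $ k)" using v by (simp add: sum_negf)
        also have "\<dots> = - (A *\<^sub>v v) $ i" using me_mv[OF A v(1) i] by simp
        finally show "0 \<le> (A *\<^sub>v - v) $ i" using v(3) i by simp
      qed
    qed
    ultimately have "v = 0\<^sub>v n" using v(1) by (intro eq_vecI) (force, simp)
    with v(2) show False by simp
  qed
  from det_non_zero_imp_unit[OF A this, of undefined]
  obtain Bi where Bi: "Bi \<in> carrier_mat n n" "A * Bi = 1\<^sub>m n" "Bi * A = 1\<^sub>m n"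
    unfolding Units_def ring_mat_simps by blast
  have uniq: "X = Bi" if X: "X \<in> carrier_mat n n" "A * X = 1\<^sub>m n" "X * A = 1\<^sub>m n" for X
  proof -
    have "X = X * 1\<^sub>m n" using X by simp
    also have "\<dots> = X * (A * Bi)" using Bi by simp
    also have "\<dots> = (X * A) * Bi" using assoc_mult_mat[OF X(1) A Bi(1)] by simp
    also have "\<dots> = Bi" using X Bi by simp
    finally show ?thesis .
  qed
  have inv: "mat_inv A = Bi"
    unfolding mat_inv_def
  proof (rule the_equality)
    have d: "dim_row A = n" using A by simp
    show "Bi \<in> carrier_mat (dim_row A) (dim_row A) \<and> A * Bi = 1\<^sub>m (dim_row A) \<and> Bi * A = 1\<^sub>m (dim_row A)"
      unfolding d using Bi by blast
    fix X assume "X \<in> carrier_mat (dim_row A) (dim_row A) \<and> A * X = 1\<^sub>m (dim_row A) \<and> X * A = 1\<^sub>m (dim_row A)"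
    then show "X = Bi" unfolding d using uniq by blast
  qed
  have nn: "\<forall>i<n. \<forall>j<n. Bi $$ (i,j) \<ge> 0"
  proof (intro allI impI)
    fix i j assume i: "i < n" and j: "j < n"
    have c: "col Bi j \<in> carrier_vec n" unfolding carrier_vec_def using Bi(1) by simp
    have e: "A *\<^sub>v col Bi j = unit_vec n j" using col_mult2[OF A Bi(1) j] Bi(2) j by simp
    have "\<forall>k<n. col Bi j $ k \<ge> 0" by (rule mono(1)[OF c]) (use e j in simp)
    thus "Bi $$ (i,j) \<ge> 0" using i j Bi by auto
  qed
  have pos: "\<forall>v \<in> carrier_vec n. (\<forall>i<n. v $ i > 0) \<longrightarrow> (\<forall>i<n. (Bi *\<^sub>v v) $ i > 0)"
  proof (intro ballI impI)
    fix v :: "real vec" assume v: "v \<in> carrier_vec n" and vp: "\<forall>i<n. v $ i > 0"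
    have e: "A *\<^sub>v (Bi *\<^sub>v v) = v"
      by (metis assoc_mult_mat_vec[OF A Bi(1) v] Bi(2) one_mult_mat_vec v)
    show "\<forall>i<n. (Bi *\<^sub>v v) $ i > 0" by (rule mono(2)) (use e vp Bi v in auto)
  qed
  show ?thesis unfolding inv using Bi nn pos by auto
qed


lemma rho_lt_1:
  fixes A :: "real mat"
  assumes A: "A \<in> carrier_mat n n" and n: "n > 0"
  and u: "u \<in> carrier_vec n" "\<forall>i<n. u $ i > 0"
  and Au: "\<forall>i<n. (\<Sum>j<n. \<bar>A $$ (i,j)\<bar> * u $ j) < u $ i"
  shows "rho A < 1"
proof -
  define Ac where "Ac = map_mat complex_of_real A"
  have Ac: "Ac \<in> carrier_mat n n" using A unfolding Ac_def by simp
  from spectral_radius_mem_max(1)[OF Ac n] obtain lam where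
    lam: "lam \<in> spectrum Ac" and r: "rho A = norm lam" unfolding rho_def Ac_def by auto
  from lam obtain x where ev: "eigenvector Ac x lam" unfolding spectrum_def eigenvalue_def by auto
  hence x: "x \<in> carrier_vec n" "x \<noteq> 0\<^sub>v n" "Ac *\<^sub>v x = lam \<cdot>\<^sub>v x"
    unfolding eigenvector_def using Ac by auto
  obtain i0 where i0: "i0 < n" and mx: "\<forall>j<n. cmod (x $ j) / u $ j \<le> cmod (x $ i0) / u $ i0"
    using exists_argmax[OF n, of "\<lambda>j. cmod (x $ j) / u $ j"] by auto
  define M where "M = cmod (x $ i0) / u $ i0"
  obtain j where j: "j < n" "x $ j \<noteq> 0"
    using x(1,2) by (metis eq_vecI index_zero_vec(1) index_zero_vec(2) carrier_vecD)
  have "0 < cmod (x $ j) / u $ j" using j u(2) by auto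
  hence Mpos: "M > 0" using mx j unfolding M_def by force
  have bnd: "cmod (x $ k) \<le> M * u $ k" if k: "k < n" for k
  proof -
    have "cmod (x $ k) / u $ k \<le> M" using mx k unfolding M_def by auto
    thus ?thesis using u(2) k by (simp add: pos_divide_le_eq mult.commute)
  qed
  have "u $ i0 > 0" using u(2) i0 by simp
  hence xi0: "cmod (x $ i0) = M * u $ i0" unfolding M_def by simp
  have "lam * x $ i0 = (Ac *\<^sub>v x) $ i0" using x(3) x(1) i0 by simp
  also have "\<dots> = (\<Sum>k<n. Ac $$ (i0,k) * x $ k)" using me_mv[OF Ac x(1) i0] .
  finally have eq: "lam * x $ i0 = (\<Sum>k<n. complex_of_real (A $$ (i0,k)) * x $ k)"
    unfolding Ac_def using A i0 by simp
  have "norm lam * cmod (x $ i0) = cmod (\<Sum>k<n. complex_of_real (A $$ (i0,k)) * x $ k)"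
    using eq by (metis norm_mult)
  also have "\<dots> \<le> (\<Sum>k<n. cmod (complex_of_real (A $$ (i0,k)) * x $ k))" by (rule norm_sum)
  also have "\<dots> = (\<Sum>k<n. \<bar>A $$ (i0,k)\<bar> * cmod (x $ k))" by (simp add: norm_mult)
  also have "\<dots> \<le> (\<Sum>k<n. \<bar>A $$ (i0,k)\<bar> * (M * u $ k))"
    by (rule sum_mono) (simp add: bnd mult_left_mono)
  also have "\<dots> = M * (\<Sum>k<n. \<bar>A $$ (i0,k)\<bar> * u $ k)"
    by (simp add: sum_distrib_left algebra_simps)
  also have "\<dots> < M * u $ i0" using Au i0 Mpos by simp
  also have "\<dots> = cmod (x $ i0)" using xi0 by simp
  finally have "norm lam * cmod (x $ i0) < 1 * cmod (x $ i0)" by simp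
  hence "norm lam < 1" using xi0 Mpos u(2) i0
    by (metis mult_less_cancel_right mult_nonneg_nonneg norm_ge_zero)
  thus ?thesis using r by simp
qed


lemma pow_mat_Suc_left:
  assumes A: "A \<in> carrier_mat n n"
  shows "A ^\<^sub>m (Suc k) = A * A ^\<^sub>m k"
proof (induct k)
  case 0
  then show ?case using A by simp
next
  case (Suc k)
  have "A ^\<^sub>m Suc (Suc k) = A ^\<^sub>m (Suc k) * A" by simp
  also have "\<dots> = (A * A ^\<^sub>m k) * A" using Suc by simp
  also have "\<dots> = A * (A ^\<^sub>m k * A)" using A by (simp add: assoc_mult_mat[of _ n n _ n _ n])
  finally show ?case by simp
qed

lemma pow_smult:
  fixes X :: "real mat"
  assumes X: "X \<in> carrier_mat n n"
  shows "(a \<cdot>\<^sub>m X) ^\<^sub>m k = (a ^ k) \<cdot>\<^sub>m (X ^\<^sub>m k)"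
proof (induct k)
  case 0
  then show ?case using X by (auto intro!: eq_matI)
next
  case (Suc k)
  have "(a \<cdot>\<^sub>m X) ^\<^sub>m Suc k = (a ^ k \<cdot>\<^sub>m X ^\<^sub>m k) * (a \<cdot>\<^sub>m X)" using Suc by simp
  also have "\<dots> = (a ^ k) \<cdot>\<^sub>m (X ^\<^sub>m k * (a \<cdot>\<^sub>m X))"
    by (rule mult_smult_assoc_mat[OF pow_carrier_mat[OF X] smult_carrier_mat[OF X]])
  also have "\<dots> = (a ^ k) \<cdot>\<^sub>m (a \<cdot>\<^sub>m (X ^\<^sub>m k * X))"
    using mult_smult_distrib[OF pow_carrier_mat[OF X] X] by simp
  also have "\<dots> = (a ^ Suc k) \<cdot>\<^sub>m (X ^\<^sub>m Suc k)"
    by (auto intro!: eq_matI)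
  finally show ?case .
qed

lemma pow_nonneg:
  fixes X :: "real mat"
  assumes X: "X \<in> carrier_mat n n" and nn: "\<forall>i<n. \<forall>j<n. X $$ (i,j) \<ge> 0"
  shows "\<forall>i<n. \<forall>j<n. (X ^\<^sub>m k) $$ (i,j) \<ge> 0"
proof (induct k)
  case 0
  then show ?case using X by auto
next
  case (Suc k)
  show ?case
  proof (intro allI impI)
    fix i j assume i: "i < n" and j: "j < n"
    have "(X ^\<^sub>m Suc k) $$ (i,j) = (\<Sum>l<n. (X ^\<^sub>m k) $$ (i,l) * X $$ (l,j))"
      using me_mult[OF pow_carrier_mat[OF X] X i j] by simp
    also have "\<dots> \<ge> 0" using Suc nn i j by (intro sum_nonneg) auto
    finally show "(X ^\<^sub>m Suc k) $$ (i,j) \<ge> 0" .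
  qed
qed

lemma Mmat_vec:
  fixes N :: "real mat"
  assumes N: "N \<in> carrier_mat n n" and w: "w \<in> carrier_vec n" and i: "i < n"
  shows "((s \<cdot>\<^sub>m 1\<^sub>m n - N) *\<^sub>v w) $ i = s * w $ i - (N *\<^sub>v w) $ i"
proof -
  have "((s \<cdot>\<^sub>m 1\<^sub>m n - N) *\<^sub>v w) $ i = (\<Sum>k<n. (s \<cdot>\<^sub>m 1\<^sub>m n - N) $$ (i,k) * w $ k)"
    by (rule me_mv) (use N w i in auto)
  also have "\<dots> = (\<Sum>k<n. (if k = i then s * w $ k else 0) - N $$ (i,k) * w $ k)"
    using N i by (intro sum.cong) (auto simp: algebra_simps)
  also have "\<dots> = s * w $ i - (\<Sum>k<n. N $$ (i,k) * w $ k)"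
    using i by (simp add: sum_subtractf)
  also have "\<dots> = s * w $ i - (N *\<^sub>v w) $ i" using me_mv[OF N w i] by simp
  finally show ?thesis .
qed

lemma nonsing_M_pos_vec:
  assumes AM: "nonsing_M_matrix n A" and n: "n > 0"
  shows "\<exists>w \<in> carrier_vec n. (\<forall>i<n. w $ i > 0) \<and> (\<forall>i<n. (A *\<^sub>v w) $ i > 0)"
proof -
  obtain s N where N: "N \<in> carrier_mat n n" and N0: "0\<^sub>m n n \<le> N" and As: "A = s \<cdot>\<^sub>m 1\<^sub>m n - N"
    and sr: "s > rho N" using AM unfolding nonsing_M_matrix_def by auto
  have Nnn: "\<forall>i<n. \<forall>j<n. N $$ (i,j) \<ge> 0" using N0 N unfolding less_eq_mat_def by auto
  define Nc where "Nc = map_mat complex_of_real N"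
  have Nc: "Nc \<in> carrier_mat n n" unfolding Nc_def using N by simp
  have rho0: "rho N \<ge> 0"
    using spectral_radius_mem_max(1)[OF Nc n] unfolding rho_def Nc_def by auto
  define t where "t = (rho N + s) / 2"
  have t: "rho N < t" "t < s" "t > 0" using sr rho0 unfolding t_def by auto
  define Mr where "Mr = (1 / t) \<cdot>\<^sub>m N"
  define Mc where "Mc = map_mat complex_of_real Mr"
  have Mr: "Mr \<in> carrier_mat n n" unfolding Mr_def using N by simp
  have Mc: "Mc \<in> carrier_mat n n" unfolding Mc_def using Mr by simp
  have srM: "spectral_radius Mc < 1"
  proof -
    from spectral_radius_mem_max(1)[OF Mc n] obtain mu where
      mu: "mu \<in> spectrum Mc" and r: "spectral_radius Mc = norm mu" by auto
    from mu obtain y where "eigenvector Mc y mu" unfolding spectrum_def eigenvalue_def by auto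
    hence y: "y \<in> carrier_vec n" "y \<noteq> 0\<^sub>v n" "Mc *\<^sub>v y = mu \<cdot>\<^sub>v y"
      unfolding eigenvector_def using Mc by auto
    have "Nc *\<^sub>v y = (complex_of_real t * mu) \<cdot>\<^sub>v y"
    proof (rule eq_vecI)
      show "dim_vec (Nc *\<^sub>v y) = dim_vec ((complex_of_real t * mu) \<cdot>\<^sub>v y)" using Nc y by simp
      fix i assume "i < dim_vec ((complex_of_real t * mu) \<cdot>\<^sub>v y)"
      hence i: "i < n" using y by simp
      have "(Nc *\<^sub>v y) $ i = (\<Sum>k<n. Nc $$ (i,k) * y $ k)" using me_mv[OF Nc y(1) i] .
      also have "\<dots> = (\<Sum>k<n. complex_of_real t * (Mc $$ (i,k) * y $ k))"
        using t(3) i N unfolding Nc_def Mc_def Mr_def by (intro sum.cong) auto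
      also have "\<dots> = complex_of_real t * (Mc *\<^sub>v y) $ i"
        using me_mv[OF Mc y(1) i] by (simp add: sum_distrib_left)
      also have "\<dots> = (complex_of_real t * mu \<cdot>\<^sub>v y) $ i" using y i by simp
      finally show "(Nc *\<^sub>v y) $ i = (complex_of_real t * mu \<cdot>\<^sub>v y) $ i" .
    qed
    hence "eigenvector Nc y (complex_of_real t * mu)" unfolding eigenvector_def using y Nc by auto
    hence "complex_of_real t * mu \<in> spectrum Nc" unfolding spectrum_def eigenvalue_def by auto
    hence "norm (complex_of_real t * mu) \<le> rho N"
      using spectral_radius_mem_max(2)[OF Nc n] unfolding rho_def Nc_def by auto
    hence "t * norm mu \<le> rho N" using t(3) by (simp add: norm_mult)
    hence "t * norm mu < t" using t by linarith
    hence "norm mu < 1" using t(3) by (metis mult.right_neutral mult_less_cancel_left_pos)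
    thus ?thesis using r by simp
  qed
  from spectral_radius_jnf_norm_bound_less_1_upper_triangular[OF Mc srM]
  obtain c where c: "\<And>k. norm_bound (Mc ^\<^sub>m k) c" by auto
  have cb: "\<bar>(Mr ^\<^sub>m k) $$ (i,j)\<bar> \<le> c" if "i < n" "j < n" for i j k
  proof -
    have "Mc ^\<^sub>m k = map_mat complex_of_real (Mr ^\<^sub>m k)"
      unfolding Mc_def by (rule of_real_hom.mat_hom_pow[OF Mr, symmetric])
    with c[of k] that Mr show ?thesis unfolding norm_bound_def by auto
  qed
  define r where "r = t / s"
  have r: "0 < r" "r < 1" using t unfolding r_def by auto
  define Ar where "Ar = (1 / s) \<cdot>\<^sub>m N"
  have Ar: "Ar \<in> carrier_mat n n" unfolding Ar_def using N by simp
  have ArMr: "Ar = r \<cdot>\<^sub>m Mr" unfolding Ar_def Mr_def r_def using t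
    by (auto intro!: eq_matI)
  have Arnn: "\<forall>i<n. \<forall>j<n. Ar $$ (i,j) \<ge> 0" using Nnn N t unfolding Ar_def by auto
  have Arpow: "\<bar>(Ar ^\<^sub>m k) $$ (i,j)\<bar> \<le> r ^ k * c" if "i < n" "j < n" for i j k
  proof -
    have "(Ar ^\<^sub>m k) $$ (i,j) = r ^ k * (Mr ^\<^sub>m k) $$ (i,j)"
      unfolding ArMr pow_smult[OF Mr] using that Mr by simp
    thus ?thesis using cb[OF that, of k] r by (simp add: abs_mult mult_left_mono)
  qed
  obtain K where K: "r ^ K < 1 / (real n * (\<bar>c\<bar> + 1))"
    using real_arch_pow_inv[OF _ r(2), of "1 / (real n * (\<bar>c\<bar> + 1))"] n by auto
  define one where "one = vec n (\<lambda>_. 1 :: real)"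
  have one: "one \<in> carrier_vec n" unfolding one_def by simp
  define ws where "ws = rec_nat (0\<^sub>v n) (\<lambda>k v. v + Ar ^\<^sub>m k *\<^sub>v one)"
  have ws0: "ws 0 = 0\<^sub>v n" and wsS: "\<And>k. ws (Suc k) = ws k + Ar ^\<^sub>m k *\<^sub>v one"
    unfolding ws_def by auto
  have zc: "Ar ^\<^sub>m k *\<^sub>v one \<in> carrier_vec n" for k
    using mult_mat_vec_carrier[OF pow_carrier_mat[OF Ar] one] .
  have wsc: "ws k \<in> carrier_vec n" for k
    by (induct k) (auto simp: ws0 wsS intro!: add_carrier_vec zc)
  have znn: "(Ar ^\<^sub>m k *\<^sub>v one) $ i \<ge> 0" if "i < n" for i k
  proof -
    have "(Ar ^\<^sub>m k *\<^sub>v one) $ i = (\<Sum>j<n. (Ar ^\<^sub>m k) $$ (i,j))"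
      using me_mv[OF pow_carrier_mat[OF Ar] one that] unfolding one_def by simp
    also have "\<dots> \<ge> 0" using pow_nonneg[OF Ar Arnn] that by (intro sum_nonneg) auto
    finally show ?thesis .
  qed
  have wsge: "\<forall>i<n. ws (Suc k) $ i \<ge> 1" for k
  proof (induct k)
    case 0
    show ?case using Ar one by (simp add: ws0 wsS one_def)
  next
    case (Suc k)
    show ?case
    proof (intro allI impI)
      fix i assume i: "i < n"
      have "ws (Suc (Suc k)) $ i = ws (Suc k) $ i + (Ar ^\<^sub>m Suc k *\<^sub>v one) $ i"
        using i Ar by (simp add: wsS del: pow_mat.simps)
      moreover have "1 \<le> ws (Suc k) $ i" using Suc i by auto
      ultimately show "ws (Suc (Suc k)) $ i \<ge> 1" using znn[OF i, of "Suc k"] by linarith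
    qed
  qed
  have tele: "\<forall>i<n. ws k $ i - (Ar *\<^sub>v ws k) $ i = 1 - (Ar ^\<^sub>m k *\<^sub>v one) $ i" for k
  proof (induct k)
    case 0
    show ?case using Ar one by (simp add: ws0 one_def)
  next
    case (Suc k)
    show ?case
    proof (intro allI impI)
      fix i assume i: "i < n"
      have e1: "Ar *\<^sub>v ws (Suc k) = Ar *\<^sub>v ws k + Ar *\<^sub>v (Ar ^\<^sub>m k *\<^sub>v one)"
        unfolding wsS using mult_add_distrib_mat_vec[OF Ar wsc zc] by simp
      have e2: "Ar *\<^sub>v (Ar ^\<^sub>m k *\<^sub>v one) = Ar ^\<^sub>m Suc k *\<^sub>v one"
        unfolding pow_mat_Suc_left[OF Ar] using assoc_mult_mat_vec[OF Ar pow_carrier_mat[OF Ar] one] by simp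
      have "(Ar *\<^sub>v ws (Suc k)) $ i = (Ar *\<^sub>v ws k) $ i + (Ar ^\<^sub>m Suc k *\<^sub>v one) $ i"
        unfolding e1 e2 using i Ar by (simp del: pow_mat.simps)
      moreover have "ws (Suc k) $ i = ws k $ i + (Ar ^\<^sub>m k *\<^sub>v one) $ i"
        unfolding wsS using i Ar by (simp del: pow_mat.simps)
      moreover have "ws k $ i - (Ar *\<^sub>v ws k) $ i = 1 - (Ar ^\<^sub>m k *\<^sub>v one) $ i" using Suc i by auto
      ultimately show "ws (Suc k) $ i - (Ar *\<^sub>v ws (Suc k)) $ i = 1 - (Ar ^\<^sub>m Suc k *\<^sub>v one) $ i"
        by linarith
    qed
  qed
  define w where "w = ws (Suc K)"
  have rK: "(Ar ^\<^sub>m Suc K *\<^sub>v one) $ i < 1" if i: "i < n" for i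
  proof -
    have "(Ar ^\<^sub>m Suc K *\<^sub>v one) $ i = (\<Sum>j<n. (Ar ^\<^sub>m Suc K) $$ (i,j))"
      using me_mv[OF pow_carrier_mat[OF Ar] one i, of "Suc K"] unfolding one_def by (simp del: pow_mat.simps)
    also have "\<dots> \<le> (\<Sum>j<n. r ^ K * \<bar>c\<bar>)"
    proof (rule sum_mono)
      fix j assume "j \<in> {..<n}"
      hence "\<bar>(Ar ^\<^sub>m Suc K) $$ (i,j)\<bar> \<le> r ^ Suc K * c" using Arpow[OF i, of j "Suc K"] by blast
      moreover have "r ^ Suc K * c \<le> r ^ Suc K * \<bar>c\<bar>" using r by (simp add: mult_left_mono)
      moreover have "r ^ Suc K * \<bar>c\<bar> \<le> r ^ K * \<bar>c\<bar>" using r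
        by (intro mult_right_mono) (auto simp: power_Suc2 mult_left_le)
      ultimately show "(Ar ^\<^sub>m Suc K) $$ (i,j) \<le> r ^ K * \<bar>c\<bar>" by linarith
    qed
    also have "\<dots> = real n * r ^ K * \<bar>c\<bar>" by simp
    also have "\<dots> \<le> real n * r ^ K * (\<bar>c\<bar> + 1)" using r by (simp add: mult_left_mono)
    also have "\<dots> < 1"
    proof -
      have "real n * (\<bar>c\<bar> + 1) > 0" using n by (simp add: add_pos_nonneg)
      hence "r ^ K * (real n * (\<bar>c\<bar> + 1)) < 1" using K by (simp add: pos_less_divide_eq)
      thus ?thesis by (simp add: algebra_simps)
    qed
    finally show ?thesis .
  qed
  show ?thesis
  proof (intro bexI conjI allI impI)
    show "w \<in> carrier_vec n" unfolding w_def by (rule wsc)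
    fix i assume i: "i < n"
    have "1 \<le> ws (Suc K) $ i" using wsge[of K] i by blast
    thus "w $ i > 0" unfolding w_def by linarith
  next
    fix i assume i: "i < n"
    have "(A *\<^sub>v w) $ i = s * w $ i - (N *\<^sub>v w) $ i"
      unfolding As using Mmat_vec[OF N _ i] wsc unfolding w_def by simp
    also have "(N *\<^sub>v w) $ i = s * (Ar *\<^sub>v w) $ i"
    proof -
      have "(N *\<^sub>v w) $ i = (\<Sum>k<n. N $$ (i,k) * w $ k)" using me_mv[OF N _ i] wsc unfolding w_def by simp
      also have "\<dots> = (\<Sum>k<n. s * (Ar $$ (i,k) * w $ k))"
        using t i N unfolding Ar_def by (intro sum.cong) auto
      also have "\<dots> = s * (Ar *\<^sub>v w) $ i"
        using me_mv[OF Ar _ i] wsc unfolding w_def by (simp add: sum_distrib_left)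
      finally show ?thesis .
    qed
    also have "s * w $ i - s * (Ar *\<^sub>v w) $ i = s * (1 - (Ar ^\<^sub>m Suc K *\<^sub>v one) $ i)"
      using tele[of "Suc K"] i unfolding w_def by (simp add: right_diff_distrib[symmetric])
    also have "\<dots> > 0" using rK[OF i] t by simp
    finally show "(A *\<^sub>v w) $ i > 0" .
  qed
qed


lemma prod_mono:
  fixes X X' Y Y' :: "real mat"
  assumes c: "X \<in> carrier_mat n n" "X' \<in> carrier_mat n n" "Y \<in> carrier_mat n n" "Y' \<in> carrier_mat n n"
  and X: "\<forall>i<n. \<forall>j<n. 0 \<le> X $$ (i,j) \<and> X $$ (i,j) \<le> X' $$ (i,j)"
  and Y: "\<forall>i<n. \<forall>j<n. 0 \<le> Y $$ (i,j) \<and> Y $$ (i,j) \<le> Y' $$ (i,j)"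
  and i: "i < n" and j: "j < n"
  shows "(X * Y) $$ (i,j) \<le> (X' * Y') $$ (i,j)"
  unfolding me_mult[OF c(1,3) i j] me_mult[OF c(2,4) i j]
proof (rule sum_mono)
  fix k assume "k \<in> {..<n}"
  hence k: "k < n" by auto
  have a: "0 \<le> X $$ (i,k)" "X $$ (i,k) \<le> X' $$ (i,k)" using X i k by auto
  have b: "0 \<le> Y $$ (k,j)" "Y $$ (k,j) \<le> Y' $$ (k,j)" using Y j k by auto
  show "X $$ (i,k) * Y $$ (k,j) \<le> X' $$ (i,k) * Y' $$ (k,j)"
    using a b by (intro mult_mono) auto
qed

lemma prod_nonneg:
  fixes X Y :: "real mat"
  assumes c: "X \<in> carrier_mat n n" "Y \<in> carrier_mat n n"
  and X: "\<forall>i<n. \<forall>j<n. 0 \<le> X $$ (i,j)"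
  and Y: "\<forall>i<n. \<forall>j<n. 0 \<le> Y $$ (i,j)"
  and i: "i < n" and j: "j < n"
  shows "0 \<le> (X * Y) $$ (i,j)"
  unfolding me_mult[OF c(1,2) i j]
  by (rule sum_nonneg) (use X Y i j in auto)

lemma mv_mono:
  fixes X :: "real mat"
  assumes c: "X \<in> carrier_mat n n" "x \<in> carrier_vec n" "y \<in> carrier_vec n"
  and X: "\<forall>i<n. \<forall>j<n. 0 \<le> X $$ (i,j)"
  and xy: "\<forall>i<n. x $ i \<le> y $ i"
  and i: "i < n"
  shows "(X *\<^sub>v x) $ i \<le> (X *\<^sub>v y) $ i"
  unfolding me_mv[OF c(1,2) i] me_mv[OF c(1,3) i]
  by (rule sum_mono, rule mult_left_mono) (use X xy i in auto)

lemma mv_nonneg: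
  fixes X :: "real mat"
  assumes c: "X \<in> carrier_mat n n" "x \<in> carrier_vec n"
  and X: "\<forall>i<n. \<forall>j<n. 0 \<le> X $$ (i,j)"
  and x: "\<forall>i<n. 0 \<le> x $ i"
  and i: "i < n"
  shows "0 \<le> (X *\<^sub>v x) $ i"
  unfolding me_mv[OF c(1,2) i]
  by (rule sum_nonneg) (use X x i in auto)

lemma iter_solution:
  fixes P Q :: "real mat"
  assumes P: "P \<in> carrier_mat n n" and Q: "Q \<in> carrier_mat n n"
  and Pnn: "\<forall>i<n. \<forall>j<n. 0 \<le> P $$ (i,j)" and Qnn: "\<forall>i<n. \<forall>j<n. 0 \<le> Q $$ (i,j)"
  and u: "u \<in> carrier_vec n" "\<forall>i<n. u $ i > 0"
  and PQu: "\<forall>i<n. (P *\<^sub>v u) $ i + (Q *\<^sub>v u) $ i \<le> u $ i"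
  shows "\<exists>W \<in> carrier_mat n n. (\<forall>i<n. \<forall>j<n. 0 \<le> W $$ (i,j)) \<and> W = P + Q * (W * W)
           \<and> (\<forall>i<n. (W *\<^sub>v u) $ i \<le> u $ i)"
proof -
  define S where "S = rec_nat (0\<^sub>m n n) (\<lambda>_ X. P + Q * (X * X))"
  have S0: "S 0 = 0\<^sub>m n n" and SS: "\<And>k. S (Suc k) = P + Q * (S k * S k)"
    unfolding S_def by auto
  have Sc: "S k \<in> carrier_mat n n" for k
    by (induct k) (use P Q in \<open>auto simp: S0 SS\<close>)
  have SSe: "S (Suc k) $$ (i,j) = P $$ (i,j) + (Q * (S k * S k)) $$ (i,j)" if "i < n" "j < n" for k i j
    unfolding SS using that P Q Sc[of k] by simp
  have Snn: "\<forall>i<n. \<forall>j<n. 0 \<le> S k $$ (i,j)" for k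
  proof (induct k)
    case 0 then show ?case by (simp add: S0)
  next
    case (Suc k)
    show ?case
    proof (intro allI impI)
      fix i j assume i: "i < n" and j: "j < n"
      have "0 \<le> (S k * S k) $$ (l,m)" if "l < n" "m < n" for l m
        using prod_nonneg[OF Sc Sc Suc Suc that] .
      hence "0 \<le> (Q * (S k * S k)) $$ (i,j)"
        using prod_nonneg[OF Q _ Qnn _ i j, of "S k * S k"] Sc[of k] by auto
      thus "0 \<le> S (Suc k) $$ (i,j)" using SSe[OF i j] Pnn i j by force
    qed
  qed
  have Smono: "\<forall>i<n. \<forall>j<n. S k $$ (i,j) \<le> S (Suc k) $$ (i,j)" for k
  proof (induct k)
    case 0 then show ?case using Snn[of 1] by (simp add: S0)
  next
    case (Suc k)
    show ?case
    proof (intro allI impI)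
      fix i j assume i: "i < n" and j: "j < n"
      have h1: "\<forall>l<n. \<forall>m<n. 0 \<le> S k $$ (l,m) \<and> S k $$ (l,m) \<le> S (Suc k) $$ (l,m)"
        using Snn Suc by auto
      have h2: "\<forall>l<n. \<forall>m<n. 0 \<le> (S k * S k) $$ (l,m) \<and> (S k * S k) $$ (l,m) \<le> (S (Suc k) * S (Suc k)) $$ (l,m)"
        using prod_nonneg[OF Sc Sc Snn Snn] prod_mono[OF Sc Sc Sc Sc h1 h1] by auto
      have "(Q * (S k * S k)) $$ (i,j) \<le> (Q * (S (Suc k) * S (Suc k))) $$ (i,j)"
        by (rule prod_mono[OF Q Q mult_carrier_mat[OF Sc Sc] mult_carrier_mat[OF Sc Sc] _ h2 i j]) (use Qnn in auto)
      thus "S (Suc k) $$ (i,j) \<le> S (Suc (Suc k)) $$ (i,j)"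
        using SSe[OF i j, of k] SSe[OF i j, of "Suc k"] by linarith
    qed
  qed
  have Sbound: "\<forall>i<n. (S k *\<^sub>v u) $ i \<le> u $ i" for k
  proof (induct k)
    case 0 then show ?case using u by (simp add: S0 less_imp_le)
  next
    case (Suc k)
    show ?case
    proof (intro allI impI)
      fix i assume i: "i < n"
      have c1: "S k *\<^sub>v u \<in> carrier_vec n" using mult_mat_vec_carrier[OF Sc u(1)] .
      have c2: "S k *\<^sub>v (S k *\<^sub>v u) \<in> carrier_vec n" using mult_mat_vec_carrier[OF Sc c1] .
      have a: "\<forall>l<n. (S k *\<^sub>v (S k *\<^sub>v u)) $ l \<le> u $ l"
      proof (intro allI impI)
        fix l assume l: "l < n"
        have "(S k *\<^sub>v (S k *\<^sub>v u)) $ l \<le> (S k *\<^sub>v u) $ l"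
          by (rule mv_mono[OF Sc c1 u(1) Snn _ l]) (use Suc in auto)
        thus "(S k *\<^sub>v (S k *\<^sub>v u)) $ l \<le> u $ l" using Suc l by force
      qed
      have "(S (Suc k) *\<^sub>v u) $ i = (P *\<^sub>v u) $ i + (Q *\<^sub>v (S k *\<^sub>v (S k *\<^sub>v u))) $ i"
      proof -
        have as: "Q * (S k * S k) *\<^sub>v u = Q *\<^sub>v (S k *\<^sub>v (S k *\<^sub>v u))"
          using assoc_mult_mat_vec[OF Q mult_carrier_mat[OF Sc Sc] u(1)]
                assoc_mult_mat_vec[OF Sc Sc u(1)] by simp
        have "(S (Suc k) *\<^sub>v u) = P *\<^sub>v u + Q *\<^sub>v (S k *\<^sub>v (S k *\<^sub>v u))"
          unfolding SS as[symmetric]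
          by (rule add_mult_distrib_mat_vec[OF P mult_carrier_mat[OF Q mult_carrier_mat[OF Sc[of k] Sc[of k]]] u(1)])
        thus ?thesis using P Q i c2 by (simp del: index_mult_mat_vec)
      qed
      also have "\<dots> \<le> (P *\<^sub>v u) $ i + (Q *\<^sub>v u) $ i"
        using mv_mono[OF Q c2 u(1) Qnn a i] by simp
      also have "\<dots> \<le> u $ i" using PQu i by auto
      finally show "(S (Suc k) *\<^sub>v u) $ i \<le> u $ i" .
    qed
  qed
  have Sent: "S k $$ (i,j) \<le> u $ i / u $ j" if i: "i < n" and j: "j < n" for k i j
  proof -
    have "S k $$ (i,j) * u $ j \<le> (\<Sum>l<n. S k $$ (i,l) * u $ l)"
      by (rule member_le_sum[of j "{..<n}" "\<lambda>l. S k $$ (i,l) * u $ l"])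
         (use j Snn u(2) i in \<open>auto intro: mult_nonneg_nonneg less_imp_le\<close>)
    also have "\<dots> = (S k *\<^sub>v u) $ i" using me_mv[OF Sc u(1) i] by simp
    also have "\<dots> \<le> u $ i" using Sbound i by auto
    finally show ?thesis using u(2) j by (simp add: pos_le_divide_eq)
  qed
  define W where "W = mat n n (\<lambda>(i,j). Sup (range (\<lambda>k. S k $$ (i,j))))"
  have Wc: "W \<in> carrier_mat n n" unfolding W_def by simp
  have lim: "(\<lambda>k. S k $$ (i,j)) \<longlonglongrightarrow> W $$ (i,j)" if i: "i < n" and j: "j < n" for i j
  proof -
    have "(\<lambda>k. S k $$ (i,j)) \<longlonglongrightarrow> Sup (range (\<lambda>k. S k $$ (i,j)))"
    proof (rule LIMSEQ_incseq_SUP)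
      show "bdd_above (range (\<lambda>k. S k $$ (i, j)))"
        using Sent[OF i j] by (intro bdd_aboveI[of _ "u $ i / u $ j"]) auto
      show "incseq (\<lambda>k. S k $$ (i, j))"
        by (rule incseq_SucI) (use Smono i j in auto)
    qed
    thus ?thesis unfolding W_def using i j by simp
  qed
  have Wnn: "\<forall>i<n. \<forall>j<n. 0 \<le> W $$ (i,j)"
  proof (intro allI impI)
    fix i j assume i: "i < n" and j: "j < n"
    show "0 \<le> W $$ (i,j)"
      by (rule LIMSEQ_le_const[OF lim[OF i j]]) (use Snn i j in auto)
  qed
  have Wfix: "W = P + Q * (W * W)"
  proof (rule eq_matI)
    show "dim_row W = dim_row (P + Q * (W * W))" "dim_col W = dim_col (P + Q * (W * W))"
      using Wc P Q by auto
    fix i j assume "i < dim_row (P + Q * (W * W))" "j < dim_col (P + Q * (W * W))"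
    hence i: "i < n" and j: "j < n" using P Q Wc by auto
    have ex: "(X * Y) $$ (l,m) = (\<Sum>k<n. X $$ (l,k) * Y $$ (k,m))"
      if "X \<in> carrier_mat n n" "Y \<in> carrier_mat n n" "l < n" "m < n" for X Y l m
      using me_mult[OF that] .
    have e1: "S (Suc k) $$ (i,j) = P $$ (i,j) + (\<Sum>l<n. Q $$ (i,l) * (\<Sum>m<n. S k $$ (l,m) * S k $$ (m,j)))" for k
    proof -
      have "(Q * (S k * S k)) $$ (i,j) = (\<Sum>l<n. Q $$ (i,l) * (S k * S k) $$ (l,j))"
        using ex[OF Q _ i j, of "S k * S k"] Sc[of k] by simp
      also have "\<dots> = (\<Sum>l<n. Q $$ (i,l) * (\<Sum>m<n. S k $$ (l,m) * S k $$ (m,j)))"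
        by (rule sum.cong) (use ex[OF Sc Sc _ j] in auto)
      finally show ?thesis using SSe[OF i j] by simp
    qed
    have e2: "(P + Q * (W * W)) $$ (i,j) = P $$ (i,j) + (\<Sum>l<n. Q $$ (i,l) * (\<Sum>m<n. W $$ (l,m) * W $$ (m,j)))"
    proof -
      have "(Q * (W * W)) $$ (i,j) = (\<Sum>l<n. Q $$ (i,l) * (W * W) $$ (l,j))"
        using ex[OF Q _ i j, of "W * W"] Wc by simp
      also have "\<dots> = (\<Sum>l<n. Q $$ (i,l) * (\<Sum>m<n. W $$ (l,m) * W $$ (m,j)))"
        by (rule sum.cong) (use ex[OF Wc Wc _ j] in auto)
      finally show ?thesis using P Q Wc i j by simp
    qed
    have "(\<lambda>k. S (Suc k) $$ (i,j)) \<longlonglongrightarrow> (P + Q * (W * W)) $$ (i,j)"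
      unfolding e1 e2
      by (intro tendsto_intros) (auto intro: lim[OF _ j] lim)
    moreover have "(\<lambda>k. S (Suc k) $$ (i,j)) \<longlonglongrightarrow> W $$ (i,j)"
      using LIMSEQ_Suc[OF lim[OF i j]] .
    ultimately show "W $$ (i,j) = (P + Q * (W * W)) $$ (i,j)" using LIMSEQ_unique by blast
  qed
  have Wu: "\<forall>i<n. (W *\<^sub>v u) $ i \<le> u $ i"
  proof (intro allI impI)
    fix i assume i: "i < n"
    have "(\<lambda>k. \<Sum>j<n. S k $$ (i,j) * u $ j) \<longlonglongrightarrow> (\<Sum>j<n. W $$ (i,j) * u $ j)"
      by (intro tendsto_intros) (use lim i in auto)
    hence "(\<lambda>k. (S k *\<^sub>v u) $ i) \<longlonglongrightarrow> (W *\<^sub>v u) $ i"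
      using me_mv[OF Sc u(1) i] me_mv[OF Wc u(1) i] by simp
    thus "(W *\<^sub>v u) $ i \<le> u $ i"
      by (rule LIMSEQ_le_const2) (use Sbound i in auto)
  qed
  show ?thesis using Wc Wnn Wfix Wu by blast
qed


lemma neg_neg_mult:
  fixes A B :: "real mat"
  assumes "A \<in> carrier_mat n n" "B \<in> carrier_mat n n"
  shows "(- A) * (- B) = A * B"
  using assms by simp

lemma sq_nonneg_of_nonpos:
  fixes X :: "real mat"
  assumes X: "X \<in> carrier_mat n n" and Xn: "\<forall>i<n. \<forall>j<n. X $$ (i,j) \<le> 0"
  and i: "i < n" and j: "j < n"
  shows "0 \<le> (X * X) $$ (i,j)"
  unfolding me_mult[OF X X i j]
  by (rule sum_nonneg) (use Xn i j in \<open>auto intro: mult_nonpos_nonpos\<close>)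

lemma generic_part_a:
  fixes P Q X :: "real mat"
  assumes P: "P \<in> carrier_mat n n" and Q: "Q \<in> carrier_mat n n" and X: "X \<in> carrier_mat n n"
  and Pnn: "\<forall>i<n. \<forall>j<n. 0 \<le> P $$ (i,j)" and Qnn: "\<forall>i<n. \<forall>j<n. 0 \<le> Q $$ (i,j)"
  and u: "u \<in> carrier_vec n" "\<forall>i<n. u $ i > 0"
  and PQu: "\<forall>i<n. (P *\<^sub>v u) $ i + (Q *\<^sub>v u) $ i \<le> u $ i"
  and Xn: "\<forall>i<n. \<forall>j<n. X $$ (i,j) \<le> 0"
  and Xfix: "\<forall>i<n. \<forall>j<n. X $$ (i,j) = - P $$ (i,j) - (Q * (X * X)) $$ (i,j)"
  and Xmax: "\<forall>Y \<in> carrier_mat n n. (\<forall>i<n. \<forall>j<n. Y $$ (i,j) \<le> 0) \<and>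
              (\<forall>i<n. \<forall>j<n. Y $$ (i,j) = - P $$ (i,j) - (Q * (Y * Y)) $$ (i,j))
              \<longrightarrow> (\<forall>i<n. \<forall>j<n. Y $$ (i,j) \<le> X $$ (i,j))"
  shows "\<forall>i<n. \<forall>j<n. X $$ (i,j) \<le> - P $$ (i,j)"
    and "\<forall>i<n. ((- X) *\<^sub>v u) $ i \<le> (P *\<^sub>v u) $ i + (Q *\<^sub>v u) $ i"
proof -
  have XXc: "X * X \<in> carrier_mat n n" using X by simp
  have XXnn: "\<forall>i<n. \<forall>j<n. 0 \<le> (X * X) $$ (i,j)"
    using sq_nonneg_of_nonpos[OF X Xn] by auto
  have Rnn: "\<forall>i<n. \<forall>j<n. 0 \<le> (Q * (X * X)) $$ (i,j)"
    using prod_nonneg[OF Q XXc Qnn XXnn] by auto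
  show "\<forall>i<n. \<forall>j<n. X $$ (i,j) \<le> - P $$ (i,j)"
    using Xfix Rnn by force
  obtain W where Wc: "W \<in> carrier_mat n n" and Wnn: "\<forall>i<n. \<forall>j<n. 0 \<le> W $$ (i,j)"
    and Wfix: "W = P + Q * (W * W)" and Wu: "\<forall>i<n. (W *\<^sub>v u) $ i \<le> u $ i"
    using iter_solution[OF P Q Pnn Qnn u PQu] by blast
  have m1: "- W \<in> carrier_mat n n" using Wc by simp
  have m2: "\<forall>i<n. \<forall>j<n. (- W) $$ (i,j) \<le> 0" using Wnn Wc by simp
  have m3: "\<forall>i<n. \<forall>j<n. (- W) $$ (i,j) = - P $$ (i,j) - (Q * ((- W) * (- W))) $$ (i,j)"
  proof -
    have "(- W) * (- W) = W * W" using Wc by simp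
    moreover have "W $$ (i,j) = P $$ (i,j) + (Q * (W * W)) $$ (i,j)" if "i < n" "j < n" for i j
      using arg_cong[OF Wfix, of "\<lambda>M. M $$ (i,j)"] that P Q Wc by simp
    ultimately show ?thesis using Wc by simp
  qed
  have "\<forall>i<n. \<forall>j<n. (- W) $$ (i,j) \<le> X $$ (i,j)" using Xmax m1 m2 m3 by blast
  hence XW: "\<forall>i<n. \<forall>j<n. (- X) $$ (i,j) \<le> W $$ (i,j)" using X Wc by force
  define F where "F = - X"
  have Fc: "F \<in> carrier_mat n n" unfolding F_def using X by simp
  have Fnn: "\<forall>i<n. \<forall>j<n. 0 \<le> F $$ (i,j)" unfolding F_def using X Xn by simp
  have FF: "X * X = F * F" unfolding F_def using X by simp
  have Fu: "\<forall>i<n. (F *\<^sub>v u) $ i \<le> u $ i"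
  proof (intro allI impI)
    fix i assume i: "i < n"
    have "(F *\<^sub>v u) $ i = (\<Sum>k<n. F $$ (i,k) * u $ k)" using me_mv[OF Fc u(1) i] .
    also have "\<dots> \<le> (\<Sum>k<n. W $$ (i,k) * u $ k)"
      by (rule sum_mono, rule mult_right_mono) (use XW u(2) i in \<open>auto simp: F_def less_imp_le\<close>)
    also have "\<dots> = (W *\<^sub>v u) $ i" using me_mv[OF Wc u(1) i] by simp
    also have "\<dots> \<le> u $ i" using Wu i by auto
    finally show "(F *\<^sub>v u) $ i \<le> u $ i" .
  qed
  have Fuc: "F *\<^sub>v u \<in> carrier_vec n" using mult_mat_vec_carrier[OF Fc u(1)] .
  have FFuc: "F *\<^sub>v (F *\<^sub>v u) \<in> carrier_vec n" using mult_mat_vec_carrier[OF Fc Fuc] .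
  have FFu: "\<forall>l<n. (F *\<^sub>v (F *\<^sub>v u)) $ l \<le> u $ l"
  proof (intro allI impI)
    fix l assume l: "l < n"
    have "(F *\<^sub>v (F *\<^sub>v u)) $ l \<le> (F *\<^sub>v u) $ l"
      by (rule mv_mono[OF Fc Fuc u(1) Fnn _ l]) (use Fu in auto)
    thus "(F *\<^sub>v (F *\<^sub>v u)) $ l \<le> u $ l" using Fu l by force
  qed
  show "\<forall>i<n. ((- X) *\<^sub>v u) $ i \<le> (P *\<^sub>v u) $ i + (Q *\<^sub>v u) $ i"
  proof (intro allI impI)
    fix i assume i: "i < n"
    have "((- X) *\<^sub>v u) $ i = (\<Sum>k<n. (- X) $$ (i,k) * u $ k)"
      using me_mv[OF _ u(1) i] X by simp
    also have "\<dots> = (\<Sum>k<n. P $$ (i,k) * u $ k + (Q * (X * X)) $$ (i,k) * u $ k)"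
    proof (rule sum.cong)
      fix k assume "k \<in> {..<n}"
      hence k: "k < n" by auto
      have "X $$ (i,k) = - P $$ (i,k) - (Q * (X * X)) $$ (i,k)" using Xfix i k by auto
      hence e: "(- X) $$ (i,k) = P $$ (i,k) + (Q * (X * X)) $$ (i,k)" using X i k by simp
      show "(- X) $$ (i,k) * u $ k = P $$ (i,k) * u $ k + (Q * (X * X)) $$ (i,k) * u $ k"
        unfolding e by (simp add: distrib_right)
    qed simp
    also have "\<dots> = (P *\<^sub>v u) $ i + ((Q * (X * X)) *\<^sub>v u) $ i"
      unfolding sum.distrib using me_mv[OF P u(1) i] me_mv[OF mult_carrier_mat[OF Q XXc] u(1) i]
      by simp
    also have "(Q * (X * X)) *\<^sub>v u = Q *\<^sub>v (F *\<^sub>v (F *\<^sub>v u))"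
      unfolding FF using assoc_mult_mat_vec[OF Q mult_carrier_mat[OF Fc Fc] u(1)]
        assoc_mult_mat_vec[OF Fc Fc u(1)] by simp
    also have "(Q *\<^sub>v (F *\<^sub>v (F *\<^sub>v u))) $ i \<le> (Q *\<^sub>v u) $ i"
      using mv_mono[OF Q FFuc u(1) Qnn FFu i] .
    finally show "((- X) *\<^sub>v u) $ i \<le> (P *\<^sub>v u) $ i + (Q *\<^sub>v u) $ i" by simp
  qed
qed

lemma nonsing_M_of:
  fixes M :: "real mat"
  assumes M: "M \<in> carrier_mat n n" and Mnn: "\<forall>i<n. \<forall>j<n. 0 \<le> M $$ (i,j)" and r: "rho M < 1"
  shows "nonsing_M_matrix n (1\<^sub>m n - M)"
  unfolding nonsing_M_matrix_def Z_matrix_def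
proof (intro conjI allI impI exI[of _ "1::real"] exI[of _ M])
  show "1\<^sub>m n - M \<in> carrier_mat n n" using minus_carrier_mat[OF M] .
  fix i j assume "i < n" "j < n" "i \<noteq> j"
  thus "(1\<^sub>m n - M) $$ (i,j) \<le> 0" using M Mnn by simp
next
  show "M \<in> carrier_mat n n" by (rule M)
  show "0\<^sub>m n n \<le> M" using mat_le_iff[OF zero_carrier_mat M] Mnn by simp
  show "1\<^sub>m n - M = 1 \<cdot>\<^sub>m 1\<^sub>m n - M" using M by (auto intro!: eq_matI)
  show "rho M < 1" by (rule r)
qed

lemma fix_Phi:
  fixes B Bi C Y :: "real mat"
  assumes B: "B \<in> carrier_mat n n" and Bi: "Bi \<in> carrier_mat n n" and C: "C \<in> carrier_mat n n"
  and Y: "Y \<in> carrier_mat n n" and BBi: "B * Bi = 1\<^sub>m n" and BiB: "Bi * B = 1\<^sub>m n"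
  shows "(Y * Y + B * Y + C = 0\<^sub>m n n) \<longleftrightarrow>
         (\<forall>i<n. \<forall>j<n. Y $$ (i,j) = - (Bi * C) $$ (i,j) - (Bi * (Y * Y)) $$ (i,j))"
proof -
  have YY: "Y * Y \<in> carrier_mat n n" using Y by simp
  have BY: "B * Y \<in> carrier_mat n n" using B Y by simp
  have BiYY: "Bi * (Y * Y) \<in> carrier_mat n n" using Bi YY by simp
  have G: "Bi * C \<in> carrier_mat n n" using Bi C by simp
  have BiBY: "Bi * (B * Y) = Y"
  proof -
    have "Bi * (B * Y) = (Bi * B) * Y" by (rule assoc_mult_mat[OF Bi B Y, symmetric])
    thus ?thesis using BiB left_mult_one_mat[OF Y] by simp
  qed
  have BBiYY: "B * (Bi * (Y * Y)) = Y * Y"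
  proof -
    have "B * (Bi * (Y * Y)) = (B * Bi) * (Y * Y)" by (rule assoc_mult_mat[OF B Bi YY, symmetric])
    thus ?thesis using BBi left_mult_one_mat[OF YY] by simp
  qed
  have BBiC: "B * (Bi * C) = C"
  proof -
    have "B * (Bi * C) = (B * Bi) * C" by (rule assoc_mult_mat[OF B Bi C, symmetric])
    thus ?thesis using BBi left_mult_one_mat[OF C] by simp
  qed
  have D: "Bi * (Y * Y + B * Y + C) = Bi * (Y * Y) + Y + Bi * C"
    using mult_add_distrib_mat[OF Bi add_carrier_mat[OF BY] C] mult_add_distrib_mat[OF Bi YY BY] BiBY
    by simp
  have D2: "B * (Bi * (Y * Y) + Y + Bi * C) = Y * Y + B * Y + C"
    using mult_add_distrib_mat[OF B add_carrier_mat[OF Y] G] mult_add_distrib_mat[OF B BiYY Y] BBiYY BBiC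
    by simp
  show ?thesis
  proof
    assume E: "Y * Y + B * Y + C = 0\<^sub>m n n"
    have Z: "Bi * (Y * Y) + Y + Bi * C = 0\<^sub>m n n" using D E Bi by simp
    show "\<forall>i<n. \<forall>j<n. Y $$ (i,j) = - (Bi * C) $$ (i,j) - (Bi * (Y * Y)) $$ (i,j)"
    proof (intro allI impI)
      fix i j assume i: "i < n" and j: "j < n"
      have "(Bi * (Y * Y) + Y + Bi * C) $$ (i,j) = 0" using Z i j by simp
      thus "Y $$ (i,j) = - (Bi * C) $$ (i,j) - (Bi * (Y * Y)) $$ (i,j)"
        using i j Bi Y C by simp
    qed
  next
    assume F: "\<forall>i<n. \<forall>j<n. Y $$ (i,j) = - (Bi * C) $$ (i,j) - (Bi * (Y * Y)) $$ (i,j)"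
    have Z: "Bi * (Y * Y) + Y + Bi * C = 0\<^sub>m n n"
      by (rule eq_matI) (use F Bi Y C in auto)
    show "Y * Y + B * Y + C = 0\<^sub>m n n" using D2 Z B by simp
  qed
qed

lemma fix_Psi:
  fixes B Bi C Y :: "real mat"
  assumes B: "B \<in> carrier_mat n n" and Bi: "Bi \<in> carrier_mat n n" and C: "C \<in> carrier_mat n n"
  and Y: "Y \<in> carrier_mat n n" and BBi: "B * Bi = 1\<^sub>m n" and BiB: "Bi * B = 1\<^sub>m n"
  shows "(C * (Y * Y) + B * Y + 1\<^sub>m n = 0\<^sub>m n n) \<longleftrightarrow>
         (\<forall>i<n. \<forall>j<n. Y $$ (i,j) = - Bi $$ (i,j) - ((Bi * C) * (Y * Y)) $$ (i,j))"
proof -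
  have YY: "Y * Y \<in> carrier_mat n n" using Y by simp
  have BY: "B * Y \<in> carrier_mat n n" using B Y by simp
  have CYY: "C * (Y * Y) \<in> carrier_mat n n" using C YY by simp
  have G: "Bi * C \<in> carrier_mat n n" using Bi C by simp
  have GYY: "(Bi * C) * (Y * Y) \<in> carrier_mat n n" using G YY by simp
  have BiBY: "Bi * (B * Y) = Y"
  proof -
    have "Bi * (B * Y) = (Bi * B) * Y" by (rule assoc_mult_mat[OF Bi B Y, symmetric])
    thus ?thesis using BiB left_mult_one_mat[OF Y] by simp
  qed
  have BiCYY: "Bi * (C * (Y * Y)) = (Bi * C) * (Y * Y)" by (rule assoc_mult_mat[OF Bi C YY, symmetric])
  have BBiC: "B * (Bi * C) = C"
  proof -
    have "B * (Bi * C) = (B * Bi) * C" by (rule assoc_mult_mat[OF B Bi C, symmetric])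
    thus ?thesis using BBi left_mult_one_mat[OF C] by simp
  qed
  have BGYY: "B * ((Bi * C) * (Y * Y)) = C * (Y * Y)"
  proof -
    have "B * ((Bi * C) * (Y * Y)) = (B * (Bi * C)) * (Y * Y)" by (rule assoc_mult_mat[OF B G YY, symmetric])
    thus ?thesis using BBiC by simp
  qed
  have D: "Bi * (C * (Y * Y) + B * Y + 1\<^sub>m n) = (Bi * C) * (Y * Y) + Y + Bi"
    using mult_add_distrib_mat[OF Bi add_carrier_mat[OF BY] one_carrier_mat] mult_add_distrib_mat[OF Bi CYY BY] BiBY BiCYY Bi
    by simp
  have D2: "B * ((Bi * C) * (Y * Y) + Y + Bi) = C * (Y * Y) + B * Y + 1\<^sub>m n"
    using mult_add_distrib_mat[OF B add_carrier_mat[OF Y] Bi] mult_add_distrib_mat[OF B GYY Y] BGYY BBi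
    by simp
  show ?thesis
  proof
    assume E: "C * (Y * Y) + B * Y + 1\<^sub>m n = 0\<^sub>m n n"
    have Z: "(Bi * C) * (Y * Y) + Y + Bi = 0\<^sub>m n n" using D E Bi by simp
    show "\<forall>i<n. \<forall>j<n. Y $$ (i,j) = - Bi $$ (i,j) - ((Bi * C) * (Y * Y)) $$ (i,j)"
    proof (intro allI impI)
      fix i j assume i: "i < n" and j: "j < n"
      have "((Bi * C) * (Y * Y) + Y + Bi) $$ (i,j) = 0" using Z i j by simp
      thus "Y $$ (i,j) = - Bi $$ (i,j) - ((Bi * C) * (Y * Y)) $$ (i,j)"
        using i j Bi Y C by simp
    qed
  next
    assume F: "\<forall>i<n. \<forall>j<n. Y $$ (i,j) = - Bi $$ (i,j) - ((Bi * C) * (Y * Y)) $$ (i,j)"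
    have Z: "(Bi * C) * (Y * Y) + Y + Bi = 0\<^sub>m n n"
      by (rule eq_matI) (use F Bi Y C in auto)
    show "C * (Y * Y) + B * Y + 1\<^sub>m n = 0\<^sub>m n n" using D2 Z B by simp
  qed
qed

theorem theorem3p4:
  fixes n :: nat and B C Phi Psi :: "real mat" and u :: "real vec"
  assumes n: "n > 0"
    and BC: "B \<in> carrier_mat n n" "C \<in> carrier_mat n n"
    and B_M: "nonsing_M_matrix n B"
    and C_M: "M_matrix n C"
    and BiC: "0\<^sub>m n n \<le> mat_inv B * C"
    and BCI: "nonsing_M_matrix n (B - C - 1\<^sub>m n)"
    and Phi: "max_nonpos_solvent n B C Phi"
    and Psi: "max_nonpos_solvent_dual n B C Psi"
    and u: "u \<in> carrier_vec n" "pos_vec u"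
    and v: "pos_vec ((B - C - 1\<^sub>m n) *\<^sub>v u)"
  shows "Phi \<le> - (mat_inv B * C) \<and> - (mat_inv B * C) \<le> 0\<^sub>m n n \<and>
         (- Phi) *\<^sub>v u \<le> u - mat_inv B *\<^sub>v ((B - C - 1\<^sub>m n) *\<^sub>v u) \<and>
         Psi \<le> - mat_inv B \<and> - mat_inv B \<le> 0\<^sub>m n n \<and>
         (- Psi) *\<^sub>v u \<le> u - mat_inv B *\<^sub>v ((B - C - 1\<^sub>m n) *\<^sub>v u) \<and>
         rho Phi < 1 \<and> rho Psi < 1 \<and>
         nonsing_M_matrix n (1\<^sub>m n - Phi * Psi) \<and>
         nonsing_M_matrix n (1\<^sub>m n - Psi * Phi)"
proof -
  from BC have B: "B \<in> carrier_mat n n" and C: "C \<in> carrier_mat n n" by auto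
  have Zb: "Z_matrix n B" using B_M unfolding nonsing_M_matrix_def by auto
  obtain w where w: "w \<in> carrier_vec n" "\<forall>i<n. w $ i > 0" "\<forall>i<n. (B *\<^sub>v w) $ i > 0"
    using nonsing_M_pos_vec[OF B_M n] by auto
  define Bi where "Bi = mat_inv B"
  have Bi: "Bi \<in> carrier_mat n n" "B * Bi = 1\<^sub>m n" "Bi * B = 1\<^sub>m n"
    "\<forall>i<n. \<forall>j<n. 0 \<le> Bi $$ (i,j)"
    "\<forall>v \<in> carrier_vec n. (\<forall>i<n. v $ i > 0) \<longrightarrow> (\<forall>i<n. (Bi *\<^sub>v v) $ i > 0)"
    using Z_inverse[OF Zb w] unfolding Bi_def by auto
  define G where "G = Bi * C"
  have Gc: "G \<in> carrier_mat n n" unfolding G_def using Bi C by simp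
  have "0\<^sub>m n n \<le> G" using BiC unfolding G_def Bi_def .
  hence Gnn: "\<forall>i<n. \<forall>j<n. 0 \<le> G $$ (i,j)" using mat_le_iff[OF zero_carrier_mat Gc] by simp
  have upos: "\<forall>i<n. u $ i > 0" using u unfolding pos_vec_def by auto
  define D where "D = B - C - 1\<^sub>m n"
  have Dc: "D \<in> carrier_mat n n" unfolding D_def by (rule minus_carrier_mat) simp
  define V where "V = D *\<^sub>v u"
  have Vc: "V \<in> carrier_vec n" unfolding V_def using mult_mat_vec_carrier[OF Dc u(1)] .
  have Vpos: "\<forall>i<n. V $ i > 0" using v Vc unfolding pos_vec_def V_def D_def by auto
  have BiV: "\<forall>i<n. (Bi *\<^sub>v V) $ i > 0" using Bi(5) Vc Vpos by auto
  have M1: "Bi * D = 1\<^sub>m n - G - Bi"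
  proof -
    have "Bi * D = Bi * (B - C) - Bi * 1\<^sub>m n"
      unfolding D_def by (rule mult_minus_distrib_mat[OF Bi(1)]) (use B C in auto)
    also have "Bi * (B - C) = Bi * B - Bi * C"
      by (rule mult_minus_distrib_mat[OF Bi(1) B C])
    finally show ?thesis using Bi unfolding G_def by simp
  qed
  have KI: "(Bi *\<^sub>v V) $ i = u $ i - (G *\<^sub>v u) $ i - (Bi *\<^sub>v u) $ i" if i: "i < n" for i
  proof -
    have "Bi *\<^sub>v V = (Bi * D) *\<^sub>v u" unfolding V_def
      by (rule assoc_mult_mat_vec[OF Bi(1) Dc u(1), symmetric])
    also have "\<dots> = (1\<^sub>m n - G) *\<^sub>v u - Bi *\<^sub>v u" unfolding M1
      by (rule minus_mult_distrib_mat_vec[OF minus_carrier_mat[OF Gc] Bi(1) u(1)])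
    also have "(1\<^sub>m n - G) *\<^sub>v u = 1\<^sub>m n *\<^sub>v u - G *\<^sub>v u"
      by (rule minus_mult_distrib_mat_vec[OF one_carrier_mat Gc u(1)])
    finally have "Bi *\<^sub>v V = 1\<^sub>m n *\<^sub>v u - G *\<^sub>v u - Bi *\<^sub>v u" .
    thus ?thesis using i u(1) Gc Bi(1) by simp
  qed
  have PQ1: "\<forall>i<n. (G *\<^sub>v u) $ i + (Bi *\<^sub>v u) $ i \<le> u $ i"
    using KI BiV by (metis diff_diff_eq less_eq_real_def diff_gt_0_iff_gt)
  have PQ2: "\<forall>i<n. (Bi *\<^sub>v u) $ i + (G *\<^sub>v u) $ i \<le> u $ i"
    using PQ1 by (simp add: add.commute)
  have RHS: "(u - Bi *\<^sub>v V) $ i = (G *\<^sub>v u) $ i + (Bi *\<^sub>v u) $ i" if i: "i < n" for i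
    using KI[OF i] i Vc Bi(1) u(1) by simp
  have RHSlt: "(u - Bi *\<^sub>v V) $ i < u $ i" if i: "i < n" for i
    using BiV Vc Bi(1) u(1) i by simp
  have RHSc: "u - Bi *\<^sub>v V \<in> carrier_vec n" by (rule minus_carrier_vec[OF u(1) mult_mat_vec_carrier[OF Bi(1) Vc]])
  have Phic: "Phi \<in> carrier_mat n n" and Phin: "\<forall>i<n. \<forall>j<n. Phi $$ (i,j) \<le> 0"
    and Phieq: "Phi * Phi + B * Phi + C = 0\<^sub>m n n"
    and Phimax: "\<forall>X \<in> carrier_mat n n. nonpos_mat X \<and> X * X + B * X + C = 0\<^sub>m n n \<longrightarrow> X \<le> Phi"
    using Phi unfolding max_nonpos_solvent_def nonpos_mat_def by auto
  have Phifix: "\<forall>i<n. \<forall>j<n. Phi $$ (i,j) = - G $$ (i,j) - (Bi * (Phi * Phi)) $$ (i,j)"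
    using fix_Phi[OF B Bi(1) C Phic Bi(2) Bi(3)] Phieq unfolding G_def by simp
  have PhiMax: "\<forall>Y \<in> carrier_mat n n. (\<forall>i<n. \<forall>j<n. Y $$ (i,j) \<le> 0) \<and>
              (\<forall>i<n. \<forall>j<n. Y $$ (i,j) = - G $$ (i,j) - (Bi * (Y * Y)) $$ (i,j))
              \<longrightarrow> (\<forall>i<n. \<forall>j<n. Y $$ (i,j) \<le> Phi $$ (i,j))"
  proof (intro ballI impI)
    fix Y assume Y: "Y \<in> carrier_mat n n" and h: "(\<forall>i<n. \<forall>j<n. Y $$ (i,j) \<le> 0) \<and>
              (\<forall>i<n. \<forall>j<n. Y $$ (i,j) = - G $$ (i,j) - (Bi * (Y * Y)) $$ (i,j))"
    have "Y * Y + B * Y + C = 0\<^sub>m n n"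
      using fix_Phi[OF B Bi(1) C Y Bi(2) Bi(3)] h unfolding G_def by simp
    moreover have "nonpos_mat Y" using h Y unfolding nonpos_mat_def by auto
    ultimately have "Y \<le> Phi" using Phimax Y by auto
    thus "\<forall>i<n. \<forall>j<n. Y $$ (i,j) \<le> Phi $$ (i,j)" using mat_le_iff[OF Y Phic] by simp
  qed
  note ga = generic_part_a[OF Gc Bi(1) Phic Gnn Bi(4) u(1) upos PQ1 Phin Phifix PhiMax]
  have Psic: "Psi \<in> carrier_mat n n" and Psin: "\<forall>i<n. \<forall>j<n. Psi $$ (i,j) \<le> 0"
    and Psieq: "C * (Psi * Psi) + B * Psi + 1\<^sub>m n = 0\<^sub>m n n"
    and Psimax: "\<forall>Y \<in> carrier_mat n n. nonpos_mat Y \<and> C * (Y * Y) + B * Y + 1\<^sub>m n = 0\<^sub>m n n \<longrightarrow> Y \<le> Psi"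
    using Psi unfolding max_nonpos_solvent_dual_def nonpos_mat_def by auto
  have Psifix: "\<forall>i<n. \<forall>j<n. Psi $$ (i,j) = - Bi $$ (i,j) - (G * (Psi * Psi)) $$ (i,j)"
    using fix_Psi[OF B Bi(1) C Psic Bi(2) Bi(3)] Psieq unfolding G_def by simp
  have PsiMax: "\<forall>Y \<in> carrier_mat n n. (\<forall>i<n. \<forall>j<n. Y $$ (i,j) \<le> 0) \<and>
              (\<forall>i<n. \<forall>j<n. Y $$ (i,j) = - Bi $$ (i,j) - (G * (Y * Y)) $$ (i,j))
              \<longrightarrow> (\<forall>i<n. \<forall>j<n. Y $$ (i,j) \<le> Psi $$ (i,j))"
  proof (intro ballI impI)
    fix Y assume Y: "Y \<in> carrier_mat n n" and h: "(\<forall>i<n. \<forall>j<n. Y $$ (i,j) \<le> 0) \<and>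
              (\<forall>i<n. \<forall>j<n. Y $$ (i,j) = - Bi $$ (i,j) - (G * (Y * Y)) $$ (i,j))"
    have "C * (Y * Y) + B * Y + 1\<^sub>m n = 0\<^sub>m n n"
      using fix_Psi[OF B Bi(1) C Y Bi(2) Bi(3)] h unfolding G_def by simp
    moreover have "nonpos_mat Y" using h Y unfolding nonpos_mat_def by auto
    ultimately have "Y \<le> Psi" using Psimax Y by auto
    thus "\<forall>i<n. \<forall>j<n. Y $$ (i,j) \<le> Psi $$ (i,j)" using mat_le_iff[OF Y Psic] by simp
  qed
  note gb = generic_part_a[OF Bi(1) Gc Psic Bi(4) Gnn u(1) upos PQ2 Psin Psifix PsiMax]
  have Phiu: "\<forall>i<n. ((- Phi) *\<^sub>v u) $ i \<le> (u - Bi *\<^sub>v V) $ i" using ga(2) RHS by simp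
  have Psiu: "\<forall>i<n. ((- Psi) *\<^sub>v u) $ i \<le> (u - Bi *\<^sub>v V) $ i" using gb(2) RHS by (simp add: add.commute)
  have Phiu2: "\<forall>i<n. ((- Phi) *\<^sub>v u) $ i < u $ i" using Phiu RHSlt by (meson le_less_trans)
  have Psiu2: "\<forall>i<n. ((- Psi) *\<^sub>v u) $ i < u $ i" using Psiu RHSlt by (meson le_less_trans)
  have absrow: "(\<Sum>j<n. \<bar>X $$ (i,j)\<bar> * u $ j) = ((- X) *\<^sub>v u) $ i"
    if X: "X \<in> carrier_mat n n" "\<forall>i<n. \<forall>j<n. X $$ (i,j) \<le> 0" and i: "i < n" for X i
  proof -
    have "((- X) *\<^sub>v u) $ i = (\<Sum>j<n. (- X) $$ (i,j) * u $ j)"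
      using me_mv[OF _ u(1) i, of "- X"] X by simp
    also have "\<dots> = (\<Sum>j<n. \<bar>X $$ (i,j)\<bar> * u $ j)"
      by (rule sum.cong) (use X i in auto)
    finally show ?thesis by simp
  qed
  have rPhi: "rho Phi < 1"
    by (rule rho_lt_1[OF Phic n u(1) upos]) (use absrow[OF Phic Phin] Phiu2 in auto)
  have rPsi: "rho Psi < 1"
    by (rule rho_lt_1[OF Psic n u(1) upos]) (use absrow[OF Psic Psin] Psiu2 in auto)
  have prodpart: "nonsing_M_matrix n (1\<^sub>m n - X * Y)"
    if X: "X \<in> carrier_mat n n" "\<forall>i<n. \<forall>j<n. X $$ (i,j) \<le> 0" "\<forall>i<n. ((- X) *\<^sub>v u) $ i < u $ i"
    and Y: "Y \<in> carrier_mat n n" "\<forall>i<n. \<forall>j<n. Y $$ (i,j) \<le> 0" "\<forall>i<n. ((- Y) *\<^sub>v u) $ i < u $ i"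
    for X Y
  proof -
    have XYc: "X * Y \<in> carrier_mat n n" using X Y by simp
    have mXc: "- X \<in> carrier_mat n n" and mYc: "- Y \<in> carrier_mat n n" using X Y by auto
    have mXnn: "\<forall>i<n. \<forall>j<n. 0 \<le> (- X) $$ (i,j)" using X by simp
    have mYnn: "\<forall>i<n. \<forall>j<n. 0 \<le> (- Y) $$ (i,j)" using Y by simp
    have eq: "X * Y = (- X) * (- Y)" using X Y by simp
    have XYnn: "\<forall>i<n. \<forall>j<n. 0 \<le> (X * Y) $$ (i,j)"
      unfolding eq using prod_nonneg[OF mXc mYc mXnn mYnn] by auto
    have Yuc: "(- Y) *\<^sub>v u \<in> carrier_vec n" using mult_mat_vec_carrier[OF mYc u(1)] .
    show ?thesis
    proof (rule nonsing_M_of[OF XYc XYnn], rule rho_lt_1[OF XYc n u(1) upos], intro allI impI)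
      fix i assume i: "i < n"
      have "(\<Sum>j<n. \<bar>(X * Y) $$ (i,j)\<bar> * u $ j) = (\<Sum>j<n. (X * Y) $$ (i,j) * u $ j)"
        by (rule sum.cong) (use XYnn i in auto)
      also have "\<dots> = ((X * Y) *\<^sub>v u) $ i" using me_mv[OF XYc u(1) i] by simp
      also have "(X * Y) *\<^sub>v u = (- X) *\<^sub>v ((- Y) *\<^sub>v u)"
        unfolding eq by (rule assoc_mult_mat_vec[OF mXc mYc u(1)])
      also have "((- X) *\<^sub>v ((- Y) *\<^sub>v u)) $ i \<le> ((- X) *\<^sub>v u) $ i"
        by (rule mv_mono[OF mXc Yuc u(1) mXnn _ i]) (use Y(3) in \<open>auto simp: less_imp_le\<close>)
      also have "\<dots> < u $ i" using X(3) i by auto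
      finally show "(\<Sum>j<n. \<bar>(X * Y) $$ (i,j)\<bar> * u $ j) < u $ i" .
    qed
  qed
  have c1: "Phi \<le> - (mat_inv B * C)"
    unfolding Bi_def[symmetric] G_def[symmetric] using mat_le_iff[OF Phic uminus_carrier_mat[OF Gc]] ga(1) Gc
    by simp
  have c2: "- (mat_inv B * C) \<le> 0\<^sub>m n n"
    unfolding Bi_def[symmetric] G_def[symmetric] using mat_le_iff[OF uminus_carrier_mat[OF Gc] zero_carrier_mat] Gnn Gc
    by simp
  have c3: "(- Phi) *\<^sub>v u \<le> u - mat_inv B *\<^sub>v ((B - C - 1\<^sub>m n) *\<^sub>v u)"
    unfolding Bi_def[symmetric] D_def[symmetric] V_def[symmetric]
    using vec_le_iff[OF mult_mat_vec_carrier[OF uminus_carrier_mat[OF Phic] u(1)] RHSc] Phiu by simp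
  have c4: "Psi \<le> - mat_inv B"
    unfolding Bi_def[symmetric] using mat_le_iff[OF Psic uminus_carrier_mat[OF Bi(1)]] gb(1) Bi(1)
    by simp
  have c5: "- mat_inv B \<le> 0\<^sub>m n n"
    unfolding Bi_def[symmetric] using mat_le_iff[OF uminus_carrier_mat[OF Bi(1)] zero_carrier_mat] Bi(1,4)
    by simp
  have c6: "(- Psi) *\<^sub>v u \<le> u - mat_inv B *\<^sub>v ((B - C - 1\<^sub>m n) *\<^sub>v u)"
    unfolding Bi_def[symmetric] D_def[symmetric] V_def[symmetric]
    using vec_le_iff[OF mult_mat_vec_carrier[OF uminus_carrier_mat[OF Psic] u(1)] RHSc] Psiu by simp
  have c9: "nonsing_M_matrix n (1\<^sub>m n - Phi * Psi)"
    using prodpart[OF Phic Phin Phiu2 Psic Psin Psiu2] .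
  have c10: "nonsing_M_matrix n (1\<^sub>m n - Psi * Phi)"
    using prodpart[OF Psic Psin Psiu2 Phic Phin Phiu2] .
  show ?thesis using c1 c2 c3 c4 c5 c6 rPhi rPsi c9 c10 by blast
qed


end
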